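(* Let $V\colon\mathbb{R}^2\to\mathbb{R}$ be continuous with $\inf_{\mathbb{R}^2}V>0$, and suppose that $H^1_V(\mathbb{R}^2)$ is continuously embedded in $L^\tau_V(\mathbb{R}^2)$ for some $\tau>2$. Assume moreover that one of the following holds: (1) $V$ is uniformly continuous on $\mathbb{R}^2$; (2) there exists $m>0$ such that \[ \sup_{\substack{x\neq y\\ |y-x|\le m/\sqrt{V(y)}}}\frac{|V(y)-V(x)|}{|y-x|}=o\big(V^{3/2}(y)\big)\quad\text{as }|y|\to+\infty . \] Then the embedding of $H^1_V(\mathbb{R}^2)$ in $L^\tau_V(\mathbb{R}^2)$ is not compact.
   Context: $H^1_V(\mathbb{R}^2)$ is the completion of $C_0^\infty(\mathbb{R}^2)$ with respect to the norm $\|u\|_V=\left(\int_{\mathbb{R}^2}(|\nabla u|^2+V(x)|u|^2)\,dx\right)^{1/2}$. $L^\tau_V(\mathbb{R}^2)$ is the space of measurable $u$ with $\int_{\mathbb{R}^2}V(x)|u|^\tau dx<+\infty$, normed by $\left(\int V|u|^\tau\right)^{1/\tau}$. *)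

theory Defs
  imports "HOL-Analysis.Analysis"
begin

fun dderiv :: "(real^2) list \<Rightarrow> (real^2 \<Rightarrow> real) \<Rightarrow> (real^2 \<Rightarrow> real)" where
  "dderiv [] f = f"
| "dderiv (v # vs) f = (\<lambda>x. frechet_derivative (dderiv vs f) (at x) v)"

definition smooth :: "(real^2 \<Rightarrow> real) \<Rightarrow> bool" where
  "smooth f \<longleftrightarrow> (\<forall>vs x. dderiv vs f differentiable (at x))"

definition test_fun :: "(real^2 \<Rightarrow> real) \<Rightarrow> bool" where
  "test_fun u \<longleftrightarrow> smooth u \<and> compact (closure {x. u x \<noteq> 0})"

definition grad_sq :: "(real^2 \<Rightarrow> real) \<Rightarrow> real^2 \<Rightarrow> real" where
  "grad_sq u x = (\<Sum>i\<in>UNIV. (frechet_derivative u (at x) (axis i 1))\<^sup>2)"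

definition HV_norm :: "(real^2 \<Rightarrow> real) \<Rightarrow> (real^2 \<Rightarrow> real) \<Rightarrow> real" where
  "HV_norm V u = sqrt (\<integral>x. grad_sq u x + V x * (u x)\<^sup>2 \<partial>lborel)"

definition LV_norm :: "(real^2 \<Rightarrow> real) \<Rightarrow> real \<Rightarrow> (real^2 \<Rightarrow> real) \<Rightarrow> real" where
  "LV_norm V \<tau> u = (\<integral>x. V x * \<bar>u x\<bar> powr \<tau> \<partial>lborel) powr (1 / \<tau>)"

text \<open>Continuous embedding of H^1_V (completion of test functions) into L^tau_V:
  the inclusion is bounded on the dense subspace of test functions.\<close>
definition cont_embedded :: "(real^2 \<Rightarrow> real) \<Rightarrow> real \<Rightarrow> bool" where
  "cont_embedded V \<tau> \<longleftrightarrow> (\<exists>C. \<forall>u. test_fun u \<longrightarrow> LV_norm V \<tau> u \<le> C * HV_norm V u)"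

text \<open>Compactness of the embedding: every H^1_V-bounded sequence (of test functions,
  which are dense) has a subsequence that is Cauchy (hence convergent) in L^tau_V.\<close>
definition compact_embedded :: "(real^2 \<Rightarrow> real) \<Rightarrow> real \<Rightarrow> bool" where
  "compact_embedded V \<tau> \<longleftrightarrow>
     (\<forall>s :: nat \<Rightarrow> real^2 \<Rightarrow> real. (\<forall>n. test_fun (s n)) \<and> (\<exists>B::real. \<forall>n. HV_norm V (s n) \<le> B) \<longrightarrow>
        (\<exists>r::nat\<Rightarrow>nat. strict_mono r \<and>
           (\<forall>e::real>0. \<exists>N::nat. \<forall>m\<ge>N. \<forall>n\<ge>N. LV_norm V \<tau> (\<lambda>x. s (r m) x - s (r n) x) < e)))"

end

theory Submission
  imports Defs "HOL-Computational_Algebra.Polynomial"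
begin


definition Hp :: "real poly \<Rightarrow> real \<Rightarrow> real" where
  "Hp p t = (if t > 0 then poly p (1/t) * exp (-1/t) else 0)"

definition nextp :: "real poly \<Rightarrow> real poly" where
  "nextp p = [:0,0,1:] * (p - pderiv p)"

lemma poly_exp_lim: "((\<lambda>s. poly q s * exp (-s)) \<longlongrightarrow> (0::real)) at_top"
proof -
  have e: "\<And>s. poly q s * exp (-s) = (\<Sum>i\<le>degree q. coeff q i * (s ^ i / exp s))"
    by (simp add: poly_altdef exp_minus divide_inverse sum_distrib_right mult.assoc)
  have "((\<lambda>s. \<Sum>i\<le>degree q. coeff q i * (s ^ i / exp s)) \<longlongrightarrow> (\<Sum>i\<le>degree q. coeff q i * 0)) at_top"
    by (intro tendsto_intros tendsto_power_div_exp_0)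
  then show ?thesis unfolding e by simp
qed

lemma poly_exp_lim0: "((\<lambda>t. poly q (1/t) * exp (-1/t)) \<longlongrightarrow> (0::real)) (at_right 0)"
proof -
  have "filterlim (\<lambda>t::real. inverse t) at_top (at_right 0)"
    by (rule filterlim_inverse_at_top_right)
  from filterlim_compose[OF poly_exp_lim this] show ?thesis by (simp add: inverse_eq_divide)
qed

lemma Hp_deriv: "(Hp p has_real_derivative Hp (nextp p) t) (at t)"
proof (cases "t > 0")
  case True
  have d: "((\<lambda>t. poly p (1/t) * exp (-1/t)) has_real_derivative
     poly (pderiv p) (1/t) * (- 1 / t^2) * exp (-1/t) + poly p (1/t) * (exp (-1/t) * (1/t^2))) (at t)"
    using True
    by (auto intro!: derivative_eq_intros DERIV_chain2[OF poly_DERIV] simp: power2_eq_square field_simps)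
  have eq: "poly (pderiv p) (1/t) * (- 1 / t^2) * exp (-1/t) + poly p (1/t) * (exp (-1/t) * (1/t^2)) = Hp (nextp p) t"
    using True by (simp add: Hp_def nextp_def power2_eq_square field_simps)
  show ?thesis
    apply (rule has_field_derivative_transform_within_open[where S="{0<..}"])
    using d eq True by (auto simp: Hp_def)
next
  case False
  show ?thesis
  proof (cases "t < 0")
    case True
    have "((\<lambda>_. 0) has_real_derivative Hp (nextp p) t) (at t)" using True by (simp add: Hp_def)
    then show ?thesis
      apply (rule has_field_derivative_transform_within_open[where S="{..<0}"])
      using True by (auto simp: Hp_def)
  next
    case False
    with \<open>\<not> t > 0\<close> have t0: "t = 0" by simp
    have L: "((\<lambda>y. (Hp p y - Hp p 0) / (y - 0)) \<longlongrightarrow> 0) (at_left 0)"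
    proof -
      have "eventually (\<lambda>y. (Hp p y - Hp p 0) / (y - 0) = 0) (at_left (0::real))"
        by (auto simp: eventually_at_left_field Hp_def intro!: exI[of _ "-1"])
      then show ?thesis by (rule tendsto_eventually)
    qed
    have R: "((\<lambda>y. (Hp p y - Hp p 0) / (y - 0)) \<longlongrightarrow> 0) (at_right 0)"
    proof -
      have "eventually (\<lambda>y. poly ([:0,1:] * p) (1/y) * exp (-1/y) = (Hp p y - Hp p 0) / (y - 0)) (at_right (0::real))"
        by (auto simp: eventually_at_right_field Hp_def intro!: exI[of _ 1])
      then show ?thesis using poly_exp_lim0[of "[:0,1:] * p"] by (rule Lim_transform_eventually[rotated])
    qed
    have "Hp (nextp p) 0 = 0" by (simp add: Hp_def)
    then show ?thesis unfolding t0 has_field_derivative_iff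
      using filterlim_split_at[OF L R] by simp
  qed
qed

definition HH :: "nat \<Rightarrow> real \<Rightarrow> real" where
  "HH k = Hp ((nextp ^^ k) 1)"

lemma HH_deriv: "(HH k has_real_derivative HH (Suc k) t) (at t)"
  unfolding HH_def by (simp add: Hp_deriv)

inductive SC :: "(real^2 \<Rightarrow> real) \<Rightarrow> bool" where
  sc_const: "SC (\<lambda>x. c)"
| sc_coord: "SC (\<lambda>x. x $ i)"
| sc_add: "SC f \<Longrightarrow> SC g \<Longrightarrow> SC (\<lambda>x. f x + g x)"
| sc_mult: "SC f \<Longrightarrow> SC g \<Longrightarrow> SC (\<lambda>x. f x * g x)"
| sc_comp: "SC f \<Longrightarrow> SC (\<lambda>x. HH k (f x))"

lemma SC_deriv: "SC f \<Longrightarrow> \<exists>D. (\<forall>x. (f has_derivative D x) (at x)) \<and> (\<forall>v. SC (\<lambda>x. D x v))"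
proof (induction rule: SC.induct)
  case (sc_const c)
  show ?case by (rule exI[of _ "\<lambda>x v. 0"]) (auto intro: SC.intros)
next
  case (sc_coord i)
  show ?case
    by (rule exI[of _ "\<lambda>x v. v $ i"]) (auto intro: SC.intros bounded_linear_vec_nth bounded_linear_imp_has_derivative)
next
  case (sc_add f g)
  then obtain Df Dg where "\<forall>x. (f has_derivative Df x) (at x)" "\<forall>v. SC (\<lambda>x. Df x v)"
     "\<forall>x. (g has_derivative Dg x) (at x)" "\<forall>v. SC (\<lambda>x. Dg x v)" by blast
  then show ?case
    by (intro exI[of _ "\<lambda>x v. Df x v + Dg x v"]) (auto intro: SC.intros has_derivative_add)
next
  case (sc_mult f g)
  then obtain Df Dg where "\<forall>x. (f has_derivative Df x) (at x)" "\<forall>v. SC (\<lambda>x. Df x v)"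
     "\<forall>x. (g has_derivative Dg x) (at x)" "\<forall>v. SC (\<lambda>x. Dg x v)" by blast
  then show ?case using sc_mult.hyps
    by (intro exI[of _ "\<lambda>x v. f x * Dg x v + Df x v * g x"]) (auto intro!: SC.intros has_derivative_mult)
next
  case (sc_comp f k)
  then obtain Df where D: "\<forall>x. (f has_derivative Df x) (at x)" "\<forall>v. SC (\<lambda>x. Df x v)" by blast
  have "((\<lambda>x. HH k (f x)) has_derivative (\<lambda>v. HH (Suc k) (f x) * Df x v)) (at x)" for x
  proof -
    have "(HH k has_derivative (\<lambda>s. HH (Suc k) (f x) * s)) (at (f x))"
      using HH_deriv[of k "f x"] by (simp add: has_field_derivative_def)
    from has_derivative_compose[OF D(1)[rule_format, of x] this] show ?thesis
      by (simp add: o_def)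
  qed
  then show ?case using D sc_comp.hyps
    by (intro exI[of _ "\<lambda>x v. HH (Suc k) (f x) * Df x v"]) (auto intro!: SC.intros)
qed

lemma SC_dderiv: "SC f \<Longrightarrow> SC (dderiv vs f)"
proof (induction vs)
  case Nil then show ?case by simp
next
  case (Cons v vs)
  then obtain D where D: "\<forall>x. (dderiv vs f has_derivative D x) (at x)" "\<forall>v. SC (\<lambda>x. D x v)"
    using SC_deriv by blast
  have "dderiv (v # vs) f = (\<lambda>x. D x v)"
  proof
    fix x show "dderiv (v # vs) f x = D x v"
      using frechet_derivative_at[OF D(1)[rule_format, of x]] by simp
  qed
  then show ?case using D by simp
qed

lemma SC_smooth: "SC f \<Longrightarrow> smooth f"
  unfolding smooth_def
proof (intro allI)
  fix vs x assume "SC f"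
  then have "SC (dderiv vs f)" by (rule SC_dderiv)
  then show "dderiv vs f differentiable (at x)"
    using SC_deriv differentiable_def by blast
qed



lemma HH0: "HH 0 t = (if t > 0 then exp (-1/t) else 0)"
  by (simp add: HH_def Hp_def)

lemma HH_zero: "t \<le> 0 \<Longrightarrow> HH k t = 0"
  by (simp add: HH_def Hp_def)

lemma HH_cont: "continuous_on S g \<Longrightarrow> continuous_on S (\<lambda>x. HH k (g x))"
proof -
  assume g: "continuous_on S g"
  have "continuous_on UNIV (HH k)"
    using HH_deriv DERIV_isCont continuous_at_imp_continuous_on by blast
  then show ?thesis using continuous_on_compose2[OF _ g] by blast
qed

lemma HH0_bounds: "0 \<le> HH 0 t" "HH 0 t \<le> 1"
  by (auto simp: HH0)

lemma HH1_bound: "\<exists>M\<ge>0. \<forall>t\<le>1. \<bar>HH 1 t\<bar> \<le> M"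
proof -
  have "continuous_on {0..1} (HH 1)"
    using HH_cont[OF continuous_on_id] by simp
  then obtain M where M: "\<forall>t\<in>{0..1}. norm (HH 1 t) \<le> M"
    using compact_continuous_image[of "{0..1}" "HH 1"] compact_imp_bounded bounded_iff
    by (metis compact_Icc image_eqI)
  show ?thesis
  proof (intro exI[of _ "max M 0"] conjI allI impI)
    fix t :: real assume "t \<le> 1"
    then show "\<bar>HH 1 t\<bar> \<le> max M 0"
    proof (cases "t \<le> 0")
      case True then show ?thesis by (simp add: HH_zero)
    next
      case False then have "t \<in> {0..1}" using \<open>t \<le> 1\<close> by simp
      then show ?thesis using M by force
    qed
  qed simp
qed

definition bump :: "real^2 \<Rightarrow> real \<Rightarrow> real^2 \<Rightarrow> real" where
  "bump y s x = HH 0 (1 - s * ((x - y) \<bullet> (x - y)))"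

lemma bump_SC: "SC (bump y s)"
proof -
  have e: "bump y s = (\<lambda>x. HH 0 ((\<lambda>x. 1 + (- s) * ((x $ 1 + (- (y $ 1))) * (x $ 1 + (- (y $ 1))) +
      (x $ 2 + (- (y $ 2))) * (x $ 2 + (- (y $ 2))))) x))"
    by (auto simp: bump_def inner_vec_def sum_2 algebra_simps)
  show ?thesis unfolding e
    by (intro SC.intros)
qed

lemma bump_deriv: "(bump y s has_derivative
   (\<lambda>w. HH 1 (1 - s * ((x - y) \<bullet> (x - y))) * (- (s * (2 * ((x - y) \<bullet> w)))))) (at x)"
proof -
  have A: "((\<lambda>x. 1 - s * ((x - y) \<bullet> (x - y))) has_derivative (\<lambda>w. - (s * (2 * ((x - y) \<bullet> w))))) (at x)"
    by (auto intro!: derivative_eq_intros simp: inner_commute)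
  have B: "(HH 0 has_derivative (\<lambda>t. HH 1 (1 - s * ((x - y) \<bullet> (x - y))) * t)) (at (1 - s * ((x - y) \<bullet> (x - y))))"
    using HH_deriv[of 0] by (simp add: has_field_derivative_def)
  from has_derivative_compose[OF A B] show ?thesis
    unfolding bump_def by simp
qed

lemma bump_grad: "grad_sq (bump y s) x = (HH 1 (1 - s * ((x - y) \<bullet> (x - y))))\<^sup>2 * (4 * s\<^sup>2 * ((x - y) \<bullet> (x - y)))"
proof -
  define a where "a = HH 1 (1 - s * ((x - y) \<bullet> (x - y)))"
  define z where "z = x - y"
  have fd: "frechet_derivative (bump y s) (at x) = (\<lambda>w. a * (- (s * (2 * (z \<bullet> w)))))"
    using frechet_derivative_at[OF bump_deriv] unfolding a_def z_def by simp
  have "grad_sq (bump y s) x = (\<Sum>i\<in>UNIV. (a * (- (s * (2 * (z $ i)))))\<^sup>2)"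
    unfolding grad_sq_def fd by (simp add: inner_axis)
  also have "\<dots> = a\<^sup>2 * (4 * s\<^sup>2 * (z \<bullet> z))"
    by (simp add: sum_2 inner_vec_def power2_eq_square algebra_simps)
  finally show ?thesis unfolding a_def z_def .
qed

lemma dd: "(x - y) \<bullet> (x - y) = (dist x y)\<^sup>2"
  by (simp add: dist_norm power2_norm_eq_inner)

lemma arg_neg:
  assumes "s > 0" "r > 0" "s * r\<^sup>2 = 1" "dist x y > r"
  shows "1 - s * ((x - y) \<bullet> (x - y)) < 0"
proof -
  have "r\<^sup>2 < (dist x y)\<^sup>2" using assms by (simp add: power_strict_mono)
  then have "s * r\<^sup>2 < s * (dist x y)\<^sup>2" using assms(1) by (rule mult_strict_left_mono)
  then show ?thesis using assms(3) by (simp add: dd)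
qed

lemma arg_le1:
  assumes "s > 0"
  shows "1 - s * ((x - y) \<bullet> (x - y)) \<le> 1"
  using assms by (simp add: dd)

lemma bump_out:
  assumes "s > 0" "r > 0" "s * r\<^sup>2 = 1" "dist x y > r"
  shows "bump y s x = 0" "HH 1 (1 - s * ((x - y) \<bullet> (x - y))) = 0"
  using arg_neg[OF assms] by (auto simp: bump_def HH_zero)

lemma bump_cont: "continuous_on UNIV (bump y s)"
  unfolding bump_def by (intro HH_cont continuous_intros)

lemma int_ind_const:
  fixes S :: "(real^2) set"
  assumes "compact S"
  shows "integrable lborel (\<lambda>x. indicator S x * K)"
    "(\<integral>x. indicator S x * K \<partial>lborel) = K * measure lborel S"
proof -
  show "integrable lborel (\<lambda>x. indicator S x * K)"
    using borel_integrable_compact[OF assms, of "\<lambda>_. K"] by simp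
  have "S \<in> sets lborel" using assms by (simp add: compact_imp_closed)
  then show "(\<integral>x. indicator S x * K \<partial>lborel) = K * measure lborel S"
    by simp
qed

lemma HV_bound:
  fixes V :: "real^2 \<Rightarrow> real"
  assumes Vpos: "\<forall>x. V x > 0" and s: "s > 0" and r: "r > 0" and sr: "s * r\<^sup>2 = 1"
    and vr: "v * r\<^sup>2 = \<rho>\<^sup>2" and v: "v > 0"
    and comp: "\<forall>x. dist x y \<le> r \<longrightarrow> V x \<le> 2 * v"
    and M1: "M1 \<ge> 0" "\<forall>t\<le>1. \<bar>HH 1 t\<bar> \<le> M1"
  shows "HV_norm V (bump y s) \<le> sqrt (pi * (4 * M1\<^sup>2 + 2 * \<rho>\<^sup>2))"
proof -
  define K where "K = 4 * M1\<^sup>2 * s + 2 * v"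
  have pt: "grad_sq (bump y s) x + V x * (bump y s x)\<^sup>2 \<le> indicator (cball y r) x * K" for x
  proof (cases "dist x y \<le> r")
    case True
    define t where "t = 1 - s * ((x - y) \<bullet> (x - y))"
    have "t \<le> 1" unfolding t_def using arg_le1[OF s] .
    then have h1: "(HH 1 t)\<^sup>2 \<le> M1\<^sup>2" using M1
      by (metis abs_ge_zero power2_abs power_mono)
    have "(dist x y)\<^sup>2 \<le> r\<^sup>2" using True by (simp add: power_mono)
    then have sd: "s * (dist x y)\<^sup>2 \<le> 1" using s sr by (metis mult_left_mono less_imp_le)
    have "grad_sq (bump y s) x = (HH 1 t)\<^sup>2 * (4 * s * (s * (dist x y)\<^sup>2))"
      unfolding bump_grad t_def dd by (simp add: power2_eq_square)
    also have "\<dots> \<le> M1\<^sup>2 * (4 * s * 1)"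
      using h1 sd s by (intro mult_mono) auto
    finally have g: "grad_sq (bump y s) x \<le> 4 * M1\<^sup>2 * s" by simp
    have "0 \<le> bump y s x" "bump y s x \<le> 1" by (simp_all add: bump_def HH0_bounds)
    then have b2: "(bump y s x)\<^sup>2 \<le> 1" by (simp add: power_le_one)
    have "V x * (bump y s x)\<^sup>2 \<le> 2 * v * 1"
      using comp True b2 Vpos v by (intro mult_mono) auto
    with g show ?thesis using True by (simp add: K_def indicator_def dist_commute)
  next
    case False
    then show ?thesis using bump_out[OF s r sr, of x y] by (simp add: bump_grad indicator_def dist_commute)
  qed
  have "(\<integral>x. grad_sq (bump y s) x + V x * (bump y s x)\<^sup>2 \<partial>lborel) \<le> (\<integral>x. indicator (cball y r) x * K \<partial>lborel)"
    using pt int_ind_const(1)[of "cball y r" K] M1 s v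
    by (intro integral_mono') (auto simp: K_def)
  also have "\<dots> = K * (r\<^sup>2 * pi)"
    using int_ind_const(2)[of "cball y r" K] circle_area[of r y] r
    by (simp add: content_cball_conv_ball)
  also have "\<dots> = pi * (4 * M1\<^sup>2 * (s * r\<^sup>2) + 2 * (v * r\<^sup>2))"
    by (simp add: K_def algebra_simps)
  also have "\<dots> = pi * (4 * M1\<^sup>2 + 2 * \<rho>\<^sup>2)" using sr vr by simp
  finally show ?thesis unfolding HV_norm_def by simp
qed

lemma bump_01: "0 \<le> bump y s x" "bump y s x \<le> 1"
  by (simp_all add: bump_def HH0_bounds)

lemma LV_lower:
  fixes V :: "real^2 \<Rightarrow> real"
  assumes Vpos: "\<forall>x. V x > 0" and Vc: "continuous_on UNIV V" and tau: "\<tau> > 0"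
    and s: "s > 0" and r: "r > 0" and sr: "s * r\<^sup>2 = 1"
    and vr: "v * r\<^sup>2 = \<rho>\<^sup>2" and v: "v > 0"
    and comp: "\<forall>x. dist x y \<le> r \<longrightarrow> v / 2 \<le> V x \<and> V x \<le> 2 * v"
    and s': "s' > 0" and r': "r' > 0" and sr': "s' * r'\<^sup>2 = 1" and v': "v' > 0"
    and comp': "\<forall>x. dist x y' \<le> r' \<longrightarrow> V x \<le> 2 * v'"
    and sep: "dist y y' \<ge> r + r'"
  shows "pi * \<rho>\<^sup>2 * exp (-4/3) powr \<tau> / 8 \<le> (\<integral>x. V x * \<bar>bump y s x - bump y' s' x\<bar> powr \<tau> \<partial>lborel)"
proof -
  define g where "g x = V x * \<bar>bump y s x - bump y' s' x\<bar> powr \<tau>" for x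
  define U where "U x = indicator (cball y r) x * (2 * v) + indicator (cball y' r') x * (2 * v')" for x
  define \<eta> where "\<eta> = exp (-4/3) powr \<tau>"
  define L where "L x = indicator (cball y (r/2)) x * (v / 2 * \<eta>)" for x
  have g0: "0 \<le> g x" for x using Vpos by (simp add: g_def less_imp_le)
  have d1: "\<bar>bump y s x - bump y' s' x\<bar> powr \<tau> \<le> 1" for x
    using bump_01[of y s x] bump_01[of y' s' x] tau by (intro powr_le1) auto
  have up: "g x \<le> U x" for x
  proof -
    consider "dist x y \<le> r" | "dist x y' \<le> r'" | "dist x y > r" "dist x y' > r'" by linarith
    then show ?thesis
    proof cases
      case 1
      have "g x \<le> V x * 1" unfolding g_def using d1[of x] Vpos by (intro mult_left_mono) (auto simp: less_imp_le)
      also have "\<dots> \<le> 2 * v" using comp 1 by auto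
      finally show ?thesis using 1 v' by (simp add: U_def indicator_def dist_commute)
    next
      case 2
      have "g x \<le> V x * 1" unfolding g_def using d1[of x] Vpos by (intro mult_left_mono) (auto simp: less_imp_le)
      also have "\<dots> \<le> 2 * v'" using comp' 2 by auto
      finally show ?thesis using 2 v by (simp add: U_def indicator_def dist_commute)
    next
      case 3
      then have "bump y s x = 0" "bump y' s' x = 0"
        using bump_out(1)[OF s r sr] bump_out(1)[OF s' r' sr'] by auto
      then show ?thesis using v v' by (simp add: g_def U_def indicator_def)
    qed
  qed
  have lo: "L x \<le> g x" for x
  proof (cases "dist x y \<le> r / 2")
    case True
    have "dist y y' \<le> dist y x + dist x y'" by (rule dist_triangle)
    then have "dist x y' > r'" using True sep r by (simp add: dist_commute)
    then have b': "bump y' s' x = 0" using bump_out(1)[OF s' r' sr'] by auto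
    define t where "t = 1 - s * ((x - y) \<bullet> (x - y))"
    have "(dist x y)\<^sup>2 \<le> (r/2)\<^sup>2" using True by (simp add: power_mono)
    then have "s * (dist x y)\<^sup>2 \<le> s * (r/2)\<^sup>2" using s by (simp add: mult_left_mono)
    also have "s * (r/2)\<^sup>2 = 1/4" using sr by (simp add: power_divide)
    finally have t34: "t \<ge> 3/4" by (simp add: t_def dd)
    then have "-1/t \<ge> -4/3" by (simp add: field_simps)
    then have bl: "exp (-4/3) \<le> bump y s x" using t34 by (simp add: bump_def HH0 t_def[symmetric])
    have "\<eta> \<le> \<bar>bump y s x - bump y' s' x\<bar> powr \<tau>"
      unfolding \<eta>_def b' using bl tau by (intro powr_mono2) auto
    moreover have "v / 2 \<le> V x" using comp True r by auto
    ultimately have "v / 2 * \<eta> \<le> g x" unfolding g_def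
      using v by (intro mult_mono) (auto simp: \<eta>_def)
    then show ?thesis using True by (simp add: L_def indicator_def dist_commute)
  next
    case False
    then show ?thesis using g0 by (simp add: L_def indicator_def dist_commute)
  qed
  have Ui: "integrable lborel U"
    unfolding U_def by (intro Bochner_Integration.integrable_add int_ind_const(1) compact_cball)
  have bc: "continuous_on UNIV (\<lambda>x. \<bar>bump y s x - bump y' s' x\<bar>)"
    by (intro continuous_intros bump_cont)
  have gm: "g \<in> borel_measurable lborel"
  proof -
    have "V \<in> borel_measurable borel" using Vc by (rule borel_measurable_continuous_onI)
    moreover have "(\<lambda>x. \<bar>bump y s x - bump y' s' x\<bar>) \<in> borel_measurable borel"
      using bc by (rule borel_measurable_continuous_onI)
    ultimately have "g \<in> borel_measurable borel" unfolding g_def by measurable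
    then show ?thesis by simp
  qed
  have gi: "integrable lborel g"
  proof (rule Bochner_Integration.integrable_bound[OF Ui gm])
    have "norm (g x) \<le> norm (U x)" for x using g0[of x] up[of x] by simp
    then show "AE x in lborel. norm (g x) \<le> norm (U x)" by simp
  qed
  have I1: "(\<integral>x. L x \<partial>lborel) \<le> (\<integral>x. g x \<partial>lborel)"
    using gi lo g0 by (intro integral_mono') auto
  have I2: "(\<integral>x. L x \<partial>lborel) = (v / 2 * \<eta>) * ((r/2)\<^sup>2 * pi)"
    using int_ind_const(2)[of "cball y (r/2)" "v / 2 * \<eta>"] circle_area[of "r/2" y] r
    unfolding L_def by (simp add: content_cball_conv_ball)
  have I3: "(v / 2 * \<eta>) * ((r/2)\<^sup>2 * pi) = pi * \<rho>\<^sup>2 * \<eta> / 8"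
    unfolding vr[symmetric] by (simp add: power_divide field_simps)
  have "pi * \<rho>\<^sup>2 * \<eta> / 8 \<le> (\<integral>x. g x \<partial>lborel)" using I1 I2 I3 by linarith
  then show ?thesis unfolding g_def \<eta>_def by simp
qed

lemma comp_exists:
  fixes V :: "real^2 \<Rightarrow> real"
  assumes c: "c > 0" "\<forall>x. V x \<ge> c"
    and H: "uniformly_continuous_on UNIV V \<or>
         (\<exists>m>0. \<forall>\<epsilon>>0. \<forall>\<^sub>F y in at_infinity.
            \<forall>x. x \<noteq> y \<and> dist y x \<le> m / sqrt (V y) \<longrightarrow>
              \<bar>V y - V x\<bar> / dist y x \<le> \<epsilon> * V y powr (3/2))"
  shows "\<exists>\<rho>>0. \<exists>T. \<forall>y. norm y \<ge> T \<longrightarrow>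
     (\<forall>x. dist x y \<le> \<rho> / sqrt (V y) \<longrightarrow> V y / 2 \<le> V x \<and> V x \<le> 2 * V y)"
  using H
proof
  assume "uniformly_continuous_on UNIV V"
  then obtain d where d: "d > 0" "\<forall>x x'. dist x' x < d \<longrightarrow> dist (V x') (V x) < c"
    unfolding uniformly_continuous_on_def using c by blast
  define \<rho> where "\<rho> = d / 2 * sqrt c"
  have "\<rho> > 0" using d c by (simp add: \<rho>_def)
  moreover have "\<forall>y. norm y \<ge> 0 \<longrightarrow>
     (\<forall>x. dist x y \<le> \<rho> / sqrt (V y) \<longrightarrow> V y / 2 \<le> V x \<and> V x \<le> 2 * V y)"
  proof (intro allI impI)
    fix y x :: "real^2" assume "dist x y \<le> \<rho> / sqrt (V y)"
    moreover have "\<rho> / sqrt (V y) \<le> \<rho> / sqrt c"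
    proof -
      have "V y \<ge> c" using c by auto
      then have "sqrt (V y) > 0" using c by (simp add: less_le_trans[OF c(1)])
      moreover have "sqrt c > 0" using c by simp
      ultimately have "0 < sqrt (V y) * sqrt c" by simp
      note p = this
      have "sqrt c \<le> sqrt (V y)" using \<open>V y \<ge> c\<close> by simp
      from divide_left_mono[OF this _ p] show ?thesis using \<open>\<rho> > 0\<close> by simp
    qed
    moreover have "\<rho> / sqrt c = d / 2" using c by (simp add: \<rho>_def)
    ultimately have "dist x y < d" using d by linarith
    then have "\<bar>V x - V y\<bar> < c" using d by (auto simp: dist_real_def)
    moreover have "V x \<ge> c" "V y \<ge> c" using c by auto
    ultimately show "V y / 2 \<le> V x \<and> V x \<le> 2 * V y" by linarith
  qed
  ultimately show ?thesis by blast
next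
  assume "\<exists>m>0. \<forall>\<epsilon>>0. \<forall>\<^sub>F y in at_infinity.
            \<forall>x. x \<noteq> y \<and> dist y x \<le> m / sqrt (V y) \<longrightarrow>
              \<bar>V y - V x\<bar> / dist y x \<le> \<epsilon> * V y powr (3/2)"
  then obtain m where m: "m > 0" and H2: "\<forall>\<epsilon>>0. \<forall>\<^sub>F y in at_infinity.
            \<forall>x. x \<noteq> y \<and> dist y x \<le> m / sqrt (V y) \<longrightarrow>
              \<bar>V y - V x\<bar> / dist y x \<le> \<epsilon> * V y powr (3/2)" by blast
  have "1 / (2 * m) > 0" using m by simp
  from H2[rule_format, OF this] obtain b where b: "\<forall>y. b \<le> norm y \<longrightarrow> (\<forall>x. x \<noteq> y \<and> dist y x \<le> m / sqrt (V y) \<longrightarrow>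
              \<bar>V y - V x\<bar> / dist y x \<le> 1 / (2 * m) * V y powr (3/2))"
    unfolding eventually_at_infinity by blast
  have "\<forall>y. norm y \<ge> b \<longrightarrow>
     (\<forall>x. dist x y \<le> m / sqrt (V y) \<longrightarrow> V y / 2 \<le> V x \<and> V x \<le> 2 * V y)"
  proof (intro allI impI)
    fix y x :: "real^2" assume y: "norm y \<ge> b" and xd: "dist x y \<le> m / sqrt (V y)"
    have Vy: "V y > 0" "V x > 0" using c by (auto intro: less_le_trans)
    have "\<bar>V y - V x\<bar> \<le> V y / 2"
    proof (cases "x = y")
      case True then show ?thesis using Vy by simp
    next
      case False
      then have dp: "dist y x > 0" by simp
      have "\<bar>V y - V x\<bar> / dist y x \<le> 1 / (2 * m) * V y powr (3/2)"
      proof -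
        have "dist y x \<le> m / sqrt (V y)" using xd by (simp add: dist_commute)
        then show ?thesis using b y False by blast
      qed
      then have "\<bar>V y - V x\<bar> \<le> 1 / (2 * m) * V y powr (3/2) * dist y x"
        using dp by (simp add: pos_divide_le_eq)
      also have "\<dots> \<le> 1 / (2 * m) * V y powr (3/2) * (m / sqrt (V y))"
        using xd m Vy by (intro mult_left_mono) (auto simp: dist_commute)
      also have "V y powr (3/2) = V y * sqrt (V y)"
        using Vy powr_add[of "V y" 1 "1/2"] by (simp add: powr_half_sqrt)
      also have "1 / (2 * m) * (V y * sqrt (V y)) * (m / sqrt (V y)) = V y / 2"
        using m Vy by (simp add: field_simps)
      finally show ?thesis .
    qed
    then show "V y / 2 \<le> V x \<and> V x \<le> 2 * V y" using Vy by linarith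
  qed
  then show ?thesis using m by blast
qed



theorem corollary2p8:
  fixes V :: "real^2 \<Rightarrow> real" and \<tau> :: real
  assumes "continuous_on UNIV V"
    and "\<exists>c>0. \<forall>x. V x \<ge> c"
    and "\<tau> > 2"
    and "cont_embedded V \<tau>"
    and "uniformly_continuous_on UNIV V \<or>
         (\<exists>m>0. \<forall>\<epsilon>>0. \<forall>\<^sub>F y in at_infinity.
            \<forall>x. x \<noteq> y \<and> dist y x \<le> m / sqrt (V y) \<longrightarrow>
              \<bar>V y - V x\<bar> / dist y x \<le> \<epsilon> * V y powr (3/2))"
  shows "\<not> compact_embedded V \<tau>"
proof
  assume CE: "compact_embedded V \<tau>"
  obtain c where c: "c > 0" "\<forall>x. V x \<ge> c" using assms(2) by blast
  have Vpos: "\<forall>x. V x > 0" using c by (auto intro: less_le_trans)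
  have tau: "\<tau> > 0" using assms(3) by simp
  obtain \<rho> T where rho: "\<rho> > 0" and comp: "\<forall>y. norm y \<ge> T \<longrightarrow>
     (\<forall>x. dist x y \<le> \<rho> / sqrt (V y) \<longrightarrow> V y / 2 \<le> V x \<and> V x \<le> 2 * V y)"
    using comp_exists[OF c assms(5)] by blast
  obtain M1 where M1: "M1 \<ge> 0" "\<forall>t\<le>1. \<bar>HH 1 t\<bar> \<le> M1" using HH1_bound by blast
  define R0 where "R0 = \<rho> / sqrt c"
  have R0: "R0 > 0" using rho c by (simp add: R0_def)
  define T' where "T' = max T 0"
  define y where "y n = (T' + 3 * R0 * real n) *\<^sub>R (axis 1 1 :: real^2)" for n
  define v where "v n = V (y n)" for n
  define s where "s n = v n / \<rho>\<^sup>2" for n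
  define r where "r n = \<rho> / sqrt (v n)" for n
  define u where "u n = bump (y n) (s n)" for n
  have v: "v n > 0" for n using Vpos by (simp add: v_def)
  have vc: "v n \<ge> c" for n using c by (simp add: v_def)
  have s: "s n > 0" for n using v rho by (simp add: s_def)
  have r: "r n > 0" for n using v rho by (simp add: r_def)
  have sr: "s n * (r n)\<^sup>2 = 1" for n using v[of n] rho
    by (simp add: s_def r_def power_divide)
  have vr: "v n * (r n)\<^sup>2 = \<rho>\<^sup>2" for n using v[of n] rho
    by (simp add: r_def power_divide)
  have rR: "r n \<le> R0" for n
  proof -
    have "sqrt c \<le> sqrt (v n)" using vc by simp
    moreover have "0 < sqrt (v n) * sqrt c" using v[of n] c by simp
    ultimately show ?thesis unfolding r_def R0_def using rho by (intro divide_left_mono) auto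
  qed
  have ny: "norm (y n) = T' + 3 * R0 * real n" for n
    using R0 by (simp add: y_def T'_def)
  have compn: "\<forall>x. dist x (y n) \<le> r n \<longrightarrow> v n / 2 \<le> V x \<and> V x \<le> 2 * v n" for n
  proof -
    have "3 * R0 * real n \<ge> 0" using R0 by simp
    moreover have "T' \<ge> T" unfolding T'_def by simp
    ultimately have "norm (y n) \<ge> T" using ny[of n] by linarith
    then show ?thesis using comp unfolding r_def v_def by blast
  qed
  have dy: "dist (y n) (y m) = 3 * R0 * \<bar>real n - real m\<bar>" for n m
  proof -
    have "y n - y m = (3 * R0 * (real n - real m)) *\<^sub>R (axis 1 1 :: real^2)"
      by (simp add: y_def algebra_simps)
    then show ?thesis using R0 by (simp add: dist_norm abs_mult)
  qed
  have test: "test_fun (u n)" for n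
  proof -
    have "{x. u n x \<noteq> 0} \<subseteq> cball (y n) (r n)"
      using bump_out(1)[OF s r sr] by (force simp: u_def dist_commute)
    then have "closure {x. u n x \<noteq> 0} \<subseteq> cball (y n) (r n)"
      by (intro closure_minimal) auto
    then have "bounded (closure {x. u n x \<noteq> 0})" using bounded_cball bounded_subset by blast
    then have "compact (closure {x. u n x \<noteq> 0})" by (simp add: compact_eq_bounded_closed)
    then show ?thesis unfolding test_fun_def u_def using SC_smooth[OF bump_SC] by simp
  qed
  have HVb: "HV_norm V (u n) \<le> sqrt (pi * (4 * M1\<^sup>2 + 2 * \<rho>\<^sup>2))" for n
    unfolding u_def using compn[of n] Vpos s r sr vr v M1
    by (intro HV_bound[where r="r n" and v="v n"]) auto
  define \<delta> where "\<delta> = (pi * \<rho>\<^sup>2 * exp (-4/3) powr \<tau> / 8) powr (1/\<tau>)"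
  have \<delta>: "\<delta> > 0" using rho by (simp add: \<delta>_def)
  have LVb: "LV_norm V \<tau> (\<lambda>x. u n x - u m x) \<ge> \<delta>" if "n \<noteq> m" for n m
  proof -
    have "\<bar>real n - real m\<bar> \<ge> 1" using that by linarith
    then have "dist (y n) (y m) \<ge> 3 * R0" using dy[of n m] R0 by simp
    then have sep: "dist (y n) (y m) \<ge> r n + r m" using rR[of n] rR[of m] R0 by linarith
    have I: "pi * \<rho>\<^sup>2 * exp (-4/3) powr \<tau> / 8 \<le> (\<integral>x. V x * \<bar>u n x - u m x\<bar> powr \<tau> \<partial>lborel)"
      unfolding u_def
      by (rule LV_lower[OF Vpos assms(1) tau s r sr vr v compn s r sr v _ sep])
         (use compn[of m] in auto)
    show ?thesis unfolding LV_norm_def \<delta>_def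
      using I tau rho by (intro powr_mono2) auto
  qed
  obtain rr :: "nat \<Rightarrow> nat" where rr: "strict_mono rr"
    and cauchy: "\<forall>e>0. \<exists>N. \<forall>m\<ge>N. \<forall>n\<ge>N. LV_norm V \<tau> (\<lambda>x. u (rr m) x - u (rr n) x) < e"
    using CE test HVb unfolding compact_embedded_def by blast
  obtain N where N: "\<forall>m\<ge>N. \<forall>n\<ge>N. LV_norm V \<tau> (\<lambda>x. u (rr m) x - u (rr n) x) < \<delta>"
    using cauchy \<delta> by blast
  have "rr (Suc N) \<noteq> rr N" using rr by (metis lessI less_irrefl strict_monoD)
  then have "LV_norm V \<tau> (\<lambda>x. u (rr (Suc N)) x - u (rr N) x) \<ge> \<delta>" by (rule LVb)
  moreover have "LV_norm V \<tau> (\<lambda>x. u (rr (Suc N)) x - u (rr N) x) < \<delta>" using N by auto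
  ultimately show False by simp
qed

end
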